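(* Let $b>0$. For any $f\in L^2_{\rm loc}(\mathbb R)$, $\|f\|_{\mathcal S^2}<\infty$ if and only if $\sup_{u\in\mathbb R}\int_{\mathbb R}|f(t+u)|^2\frac{dt}{b^2+t^2}<\infty$. Moreover, $$k_b\,\|f\|_{\mathcal S^2}^2\le\sup_{u\in\mathbb R}\int_{\mathbb R}|f(t+u)|^2\frac{dt}{b^2+t^2}\le K_b\,\|f\|_{\mathcal S^2}^2,$$ where $k_b=\frac{1}{b^2+1}$ and $K_b=2\sum_{w\ge0}\frac{1}{b^2+w^2}+\frac{1}{b^2}$.
   Context: For $f\in L^2_{\rm loc}(\mathbb R)$, $\|f\|_{\mathcal S^2}=\sup_{x\in\mathbb R}\big(\int_x^{x+1}|f(t)|^2dt\big)^{1/2}$. *)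

theory Defs
  imports "HOL-Analysis.Analysis"
begin

definition L2_loc :: "(real \<Rightarrow> complex) \<Rightarrow> bool" where
  "L2_loc f \<longleftrightarrow> f \<in> borel_measurable lebesgue \<and>
     (\<forall>a b. (\<integral>\<^sup>+ t\<in>{a..b}. ennreal ((cmod (f t))\<^sup>2) \<partial>lebesgue) < \<infinity>)"

definition S2_norm :: "(real \<Rightarrow> complex) \<Rightarrow> ennreal" where
  "S2_norm f = (SUP x::real. ennreal (sqrt (enn2real
      (\<integral>\<^sup>+ t\<in>{x..x+1}. ennreal ((cmod (f t))\<^sup>2) \<partial>lebesgue))))"

definition weighted_sup :: "real \<Rightarrow> (real \<Rightarrow> complex) \<Rightarrow> ennreal" where
  "weighted_sup b f = (SUP u::real.
      \<integral>\<^sup>+ t. ennreal ((cmod (f (t + u)))\<^sup>2 / (b\<^sup>2 + t\<^sup>2)) \<partial>lebesgue)"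

definition k_const :: "real \<Rightarrow> real" where
  "k_const b = 1 / (b\<^sup>2 + 1)"

definition K_const :: "real \<Rightarrow> real" where
  "K_const b = 2 * (\<Sum>w. 1 / (b\<^sup>2 + (real w)\<^sup>2)) + 1 / b\<^sup>2"

end

theory Submission
  imports Defs
begin

lemma summ: assumes "b > 0" shows "summable (\<lambda>w::nat. 1 / (b\<^sup>2 + (real w)\<^sup>2))"
proof (rule summable_comparison_test'[where N=1])
  show "summable (\<lambda>n::nat. inverse (real n ^ 2))" by (rule inverse_power_summable) simp
  fix n :: nat assume "n \<ge> 1"
  moreover have "b\<^sup>2 + (real n)\<^sup>2 > 0" using assms by (simp add: add_pos_nonneg)
  ultimately show "norm (1 / (b\<^sup>2 + (real n)\<^sup>2)) \<le> inverse (real n ^ 2)"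
    by (auto simp: divide_simps)
qed

lemma sup_sq: fixes a :: "real \<Rightarrow> ennreal"
  shows "(SUP x. a x)\<^sup>2 = (SUP x. (a x)\<^sup>2)"
proof (rule antisym)
  have "(SUP x. a x)\<^sup>2 = (SUP y. SUP x. a x * a y)"
    by (simp add: power2_eq_square SUP_mult_left_ennreal SUP_mult_right_ennreal)
  also have "\<dots> \<le> (SUP x. (a x)\<^sup>2)"
  proof (intro SUP_least)
    fix y x
    have "a x * a y \<le> (a x)\<^sup>2 \<or> a x * a y \<le> (a y)\<^sup>2"
    proof (cases "a x \<le> a y")
      case True thus ?thesis by (simp add: power2_eq_square mult_right_mono)
    next
      case False thus ?thesis by (simp add: power2_eq_square mult_left_mono)
    qed
    thus "a x * a y \<le> (SUP x. (a x)\<^sup>2)"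
      by (meson SUP_upper2 UNIV_I order_refl)
  qed
  finally show "(SUP x. a x)\<^sup>2 \<le> (SUP x. (a x)\<^sup>2)" .
  show "(SUP x. (a x)\<^sup>2) \<le> (SUP x. a x)\<^sup>2"
    by (intro SUP_least power_mono SUP_upper) auto
qed

lemma shift:
  fixes F :: "real \<Rightarrow> ennreal"
  assumes [measurable]: "F \<in> borel_measurable lebesgue"
  shows "(\<integral>\<^sup>+x. F x \<partial>lebesgue) = (\<integral>\<^sup>+x. F (u + x) \<partial>lebesgue)"
  using nn_integral_real_affine_lebesgue[OF assms, of 1 u] by simp

lemma pw:
  fixes b u s c :: real
  assumes "b > 0" "c \<ge> 0"
  shows "ennreal (c / (b\<^sup>2 + (s - u)\<^sup>2)) \<le>
    (\<Sum>n. ennreal (1 / (b\<^sup>2 + (real n)\<^sup>2)) * (ennreal c * indicator {real n + u..real n + u + 1} s))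
  + (\<Sum>n. ennreal (1 / (b\<^sup>2 + (real n)\<^sup>2)) * (ennreal c * indicator {u - real n - 1..u - real n - 1 + 1} s))"
    (is "?L \<le> ?A + ?B")
proof -
  have key: "?L \<le> ennreal (1 / (b\<^sup>2 + (real n)\<^sup>2)) * ennreal c"
    if "(real n)\<^sup>2 \<le> (s-u)\<^sup>2" for n :: nat
  proof -
    have "c / (b\<^sup>2 + (s - u)\<^sup>2) \<le> 1 / (b\<^sup>2 + (real n)\<^sup>2) * c"
      using that assms by (auto simp: divide_simps add_pos_nonneg mult_left_mono)
    hence "?L \<le> ennreal (1 / (b\<^sup>2 + (real n)\<^sup>2) * c)" by (rule ennreal_leI)
    also have "\<dots> = ennreal (1 / (b\<^sup>2 + (real n)\<^sup>2)) * ennreal c"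
      by (rule ennreal_mult''[OF assms(2)])
    finally show ?thesis .
  qed
  have le: "F n \<le> (\<Sum>n. F n)" for F :: "nat \<Rightarrow> ennreal" and n
    using sum_le_suminf[of F "{n}"] by (auto simp: summableI)
  show ?thesis
  proof (cases "s - u \<ge> 0")
    case True
    define n where "n = nat \<lfloor>s - u\<rfloor>"
    have n1: "real n \<le> s - u" "s - u \<le> real n + 1" using True unfolding n_def
      by (auto simp: of_nat_nat)
    hence "(real n)\<^sup>2 \<le> (s-u)\<^sup>2" by (simp add: power_mono)
    hence "?L \<le> ennreal (1 / (b\<^sup>2 + (real n)\<^sup>2)) * (ennreal c * indicator {real n + u..real n + u + 1} s)"
      using key n1 by (simp add: indicator_def)
    also have "\<dots> \<le> ?A" by (rule le)
    also have "\<dots> \<le> ?A + ?B" by simp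
    finally show ?thesis .
  next
    case False
    define n where "n = nat \<lfloor>u - s\<rfloor>"
    have n1: "real n \<le> u - s" "u - s \<le> real n + 1" using False unfolding n_def
      by (auto simp: of_nat_nat)
    hence "(real n)\<^sup>2 \<le> (s-u)\<^sup>2" by (metis power2_commute power_mono of_nat_0_le_iff)
    hence "?L \<le> ennreal (1 / (b\<^sup>2 + (real n)\<^sup>2)) * (ennreal c * indicator {u - real n - 1..u - real n - 1 + 1} s)"
      using key n1 by (simp add: indicator_def)
    also have "\<dots> \<le> ?B" by (rule le)
    also have "\<dots> \<le> ?A + ?B" by simp
    finally show ?thesis .
  qed
qed

theorem lemma6p5:
  fixes b :: real and f :: "real \<Rightarrow> complex"
  assumes "b > 0" and "L2_loc f"
  shows "(S2_norm f < \<infinity> \<longleftrightarrow> weighted_sup b f < \<infinity>) \<and>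
         ennreal (k_const b) * (S2_norm f)\<^sup>2 \<le> weighted_sup b f \<and>
         weighted_sup b f \<le> ennreal (K_const b) * (S2_norm f)\<^sup>2"
proof -
  have meas[measurable]: "f \<in> borel_measurable lebesgue"
    and fin: "\<And>a c. (\<integral>\<^sup>+ t\<in>{a..c}. ennreal ((cmod (f t))\<^sup>2) \<partial>lebesgue) < \<infinity>"
    using assms(2) unfolding L2_loc_def by auto
  have idm[measurable]: "(\<lambda>x::real. x) \<in> borel_measurable lebesgue"
    using measurable_completion[of "\<lambda>x::real. x" lborel borel] by simp
  define I where "I x = (\<integral>\<^sup>+ t\<in>{x..x+1}. ennreal ((cmod (f t))\<^sup>2) \<partial>lebesgue)" for x
  define S where "S = (SUP x. I x)"
  define W where "W = weighted_sup b f"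
  define C where "C = (\<Sum>w. 1 / (b\<^sup>2 + (real w)\<^sup>2))"
  have b2: "b\<^sup>2 > 0" using assms(1) by simp
  have S2: "(S2_norm f)\<^sup>2 = S"
    unfolding S2_norm_def sup_sq S_def
  proof (rule SUP_cong[OF refl])
    fix x
    have "(ennreal (sqrt (enn2real (I x))))\<^sup>2 = ennreal ((sqrt (enn2real (I x)))\<^sup>2)"
      by (simp add: ennreal_power)
    also have "\<dots> = ennreal (enn2real (I x))" by simp
    also have "\<dots> = I x" using fin unfolding I_def by simp
    finally show "(ennreal (sqrt (enn2real (\<integral>\<^sup>+ t\<in>{x..x+1}. ennreal ((cmod (f t))\<^sup>2) \<partial>lebesgue))))\<^sup>2 = I x"
      unfolding I_def .
  qed
  have J: "(\<integral>\<^sup>+t. ennreal ((cmod (f (t+u)))\<^sup>2/(b\<^sup>2+t\<^sup>2)) \<partial>lebesgue)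
       = (\<integral>\<^sup>+s. ennreal ((cmod (f s))\<^sup>2/(b\<^sup>2+(s-u)\<^sup>2)) \<partial>lebesgue)" for u
  proof -
    have "(\<lambda>s. ennreal ((cmod (f s))\<^sup>2/(b\<^sup>2+(s-u)\<^sup>2))) \<in> borel_measurable lebesgue"
      by measurable
    from shift[OF this, of u] show ?thesis by (simp add: add.commute)
  qed
  have lower: "ennreal (k_const b) * S \<le> W"
    unfolding S_def SUP_mult_left_ennreal W_def weighted_sup_def
  proof (rule SUP_least)
    fix x
    have "ennreal (k_const b) * I x
        = (\<integral>\<^sup>+ s. ennreal (k_const b) * (ennreal ((cmod (f s))\<^sup>2) * indicator {x..x+1} s) \<partial>lebesgue)"
      unfolding I_def by (rule nn_integral_cmult[symmetric]) measurable
    also have "\<dots> = (\<integral>\<^sup>+ t. ennreal (k_const b) * (ennreal ((cmod (f (x+t)))\<^sup>2) * indicator {x..x+1} (x+t)) \<partial>lebesgue)"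
      by (rule shift) measurable
    also have "\<dots> \<le> (\<integral>\<^sup>+t. ennreal ((cmod (f (t+x)))\<^sup>2/(b\<^sup>2+t\<^sup>2)) \<partial>lebesgue)"
    proof (rule nn_integral_mono)
      fix t
      show "ennreal (k_const b) * (ennreal ((cmod (f (x+t)))\<^sup>2) * indicator {x..x+1} (x+t))
           \<le> ennreal ((cmod (f (t+x)))\<^sup>2/(b\<^sup>2+t\<^sup>2))"
      proof (cases "0 \<le> t \<and> t \<le> 1")
        case True
        have "t\<^sup>2 \<le> 1" using True by (simp add: power_le_one)
        hence "k_const b * (cmod (f (x+t)))\<^sup>2 \<le> (cmod (f (t+x)))\<^sup>2/(b\<^sup>2+t\<^sup>2)"
        proof -
          have p: "b\<^sup>2+t\<^sup>2 > 0" using b2 by (simp add: add_pos_nonneg)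
          have "(cmod (f (t+x)))\<^sup>2 / (b\<^sup>2+1) \<le> (cmod (f (t+x)))\<^sup>2/(b\<^sup>2+t\<^sup>2)"
            by (rule divide_left_mono) (use \<open>t\<^sup>2 \<le> 1\<close> p b2 in auto)
          thus ?thesis by (simp add: k_const_def add.commute)
        qed
        hence "ennreal (k_const b * (cmod (f (x+t)))\<^sup>2) \<le> ennreal ((cmod (f (t+x)))\<^sup>2/(b\<^sup>2+t\<^sup>2))"
          by (rule ennreal_leI)
        thus ?thesis using True by (simp add: indicator_def ennreal_mult'')
      next
        case False
        thus ?thesis by (auto simp: indicator_def)
      qed
    qed
    also have "\<dots> \<le> (SUP u. \<integral>\<^sup>+t. ennreal ((cmod (f (t+u)))\<^sup>2/(b\<^sup>2+t\<^sup>2)) \<partial>lebesgue)"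
      by (rule SUP_upper) simp
    finally show "ennreal (k_const b) * I x \<le> (SUP u. \<integral>\<^sup>+t. ennreal ((cmod (f (t+u)))\<^sup>2/(b\<^sup>2+t\<^sup>2)) \<partial>lebesgue)" .
  qed
  have IS: "I x \<le> S" for x unfolding S_def by (rule SUP_upper) simp
  have sumle: "(\<Sum>n. ennreal (1 / (b\<^sup>2 + (real n)\<^sup>2)) * I (h n)) \<le> ennreal C * S" for h
  proof -
    have "(\<Sum>n. ennreal (1 / (b\<^sup>2 + (real n)\<^sup>2)) * I (h n)) \<le> (\<Sum>n. S * ennreal (1 / (b\<^sup>2 + (real n)\<^sup>2)))"
      by (rule suminf_le) (auto simp: IS mult.commute intro: mult_right_mono)
    also have "\<dots> = S * ennreal C"
      unfolding ennreal_suminf_cmult C_def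
      by (subst suminf_ennreal2) (auto intro: summ assms(1))
    finally show ?thesis by (simp add: mult.commute)
  qed
  have C0: "C \<ge> 0" unfolding C_def
    by (rule suminf_nonneg[OF summ[OF assms(1)]]) (intro divide_nonneg_nonneg zero_le_one add_nonneg_nonneg zero_le_power2)
  have C2: "ennreal (2 * C) = ennreal C + ennreal C"
    using C0 by (metis ennreal_plus mult_2)
  have upper: "W \<le> ennreal (K_const b) * S"
    unfolding W_def weighted_sup_def
  proof (rule SUP_least)
    fix u
    let ?c = "\<lambda>n::nat. ennreal (1 / (b\<^sup>2 + (real n)\<^sup>2))"
    let ?g = "\<lambda>s. ennreal ((cmod (f s))\<^sup>2)"
    have split: "(\<integral>\<^sup>+s. (\<Sum>n. ?c n * (?g s * indicator {h n..h n + 1} s)) \<partial>lebesgue) = (\<Sum>n. ?c n * I (h n))"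
      for h :: "nat \<Rightarrow> real"
    proof -
      have "(\<integral>\<^sup>+s. (\<Sum>n. ?c n * (?g s * indicator {h n..h n + 1} s)) \<partial>lebesgue)
          = (\<Sum>n. \<integral>\<^sup>+s. ?c n * (?g s * indicator {h n..h n + 1} s) \<partial>lebesgue)"
        by (rule nn_integral_suminf) measurable
      also have "\<dots> = (\<Sum>n. ?c n * I (h n))" unfolding I_def
        by (intro arg_cong[where f=suminf] ext nn_integral_cmult) measurable
      finally show ?thesis .
    qed
    have "(\<integral>\<^sup>+t. ennreal ((cmod (f (t+u)))\<^sup>2/(b\<^sup>2+t\<^sup>2)) \<partial>lebesgue)
       = (\<integral>\<^sup>+s. ennreal ((cmod (f s))\<^sup>2/(b\<^sup>2+(s-u)\<^sup>2)) \<partial>lebesgue)" by (rule J)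
    also have "\<dots> \<le> (\<integral>\<^sup>+s. (\<Sum>n. ?c n * (?g s * indicator {real n + u..real n + u + 1} s))
       + (\<Sum>n. ?c n * (?g s * indicator {u - real n - 1..u - real n - 1 + 1} s)) \<partial>lebesgue)"
      by (rule nn_integral_mono) (rule pw[OF assms(1)], simp)
    also have "\<dots> = (\<integral>\<^sup>+s. (\<Sum>n. ?c n * (?g s * indicator {real n + u..real n + u + 1} s)) \<partial>lebesgue)
       + (\<integral>\<^sup>+s. (\<Sum>n. ?c n * (?g s * indicator {u - real n - 1..u - real n - 1 + 1} s)) \<partial>lebesgue)"
      by (rule nn_integral_add) measurable
    also have "\<dots> = (\<Sum>n. ?c n * I (real n + u)) + (\<Sum>n. ?c n * I (u - real n - 1))"
      by (simp only: split[of "\<lambda>n. real n + u"] split[of "\<lambda>n. u - real n - 1"])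
    also have "\<dots> \<le> ennreal C * S + ennreal C * S"
      by (intro add_mono sumle)
    also have "\<dots> = ennreal (2 * C) * S"
      by (simp only: C2 distrib_right)
    also have "\<dots> \<le> ennreal (K_const b) * S"
      unfolding K_const_def C_def by (intro mult_right_mono ennreal_leI) auto
    finally show "(\<integral>\<^sup>+t. ennreal ((cmod (f (t+u)))\<^sup>2/(b\<^sup>2+t\<^sup>2)) \<partial>lebesgue) \<le> ennreal (K_const b) * S" .
  qed
  have kpos: "k_const b > 0" using b2 unfolding k_const_def by (smt (verit) divide_pos_pos)
  have iff: "S2_norm f < \<infinity> \<longleftrightarrow> W < \<infinity>"
  proof
    assume "S2_norm f < \<infinity>"
    hence "S < \<infinity>" unfolding S2[symmetric] by (simp add: power_less_top_ennreal)
    hence "ennreal (K_const b) * S < \<infinity>" by (simp add: ennreal_mult_less_top)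
    thus "W < \<infinity>" using upper by (rule le_less_trans[rotated])
  next
    assume "W < \<infinity>"
    hence "ennreal (k_const b) * S < \<infinity>" using lower by (rule le_less_trans[rotated])
    hence "S < \<infinity>" using kpos by (auto simp: ennreal_mult_less_top)
    thus "S2_norm f < \<infinity>" unfolding S2[symmetric] by (simp add: power_less_top_ennreal)
  qed
  show ?thesis using iff lower upper unfolding S2 W_def by simp
qed

end
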